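(* Assume the following setting. Let $(E,\mathcal{E},\mu)$ be a non-atomic $\sigma$-finite measure space with $\mu(E)=\infty$. Let $(a_n)_{n\ge1}$ be positive numbers with $a_n\to\infty$ and $a_n=o(n)$. For each $n$ let $P_n$ be a probability measure on $(E,\mathcal{E})$ such that $\mu_n:=(n/a_n)P_n$ satisfies $\mu_n(B)\le\mu_{n+1}(B)$ and $\mu_n(B)\to\mu(B)$ for every $B\in\mathcal{E}$. Let $k_1,k_2\in\mathbb{N}_+$, $f\in L^2(\mu^{k_1})$, $g\in L^2(\mu^{k_2})$ and $0\le l\le\min(k_1,k_2)$. Then for every $n\in\mathbb{N}_+$, $$|F_l^{(n)}(f,g)|\le\|f\|_{L^2(\mu^{k_1})}\,\|g\|_{L^2(\mu^{k_2})}.$$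
   Context: Write $f\otimes g(x_1,\dots,x_{k_1+k_2})=f(x_1,\dots,x_{k_1})g(x_{k_1+1},\dots,x_{k_1+k_2})$. A diagram with $l$ edges is an edge set $\mathcal{N}=\{(j_1,j_1'),\dots,(j_l,j_l')\}$ with $1\le j_s\le k_1$, $k_1+1\le j_s'\le k_1+k_2$, the $j_s$ pairwise distinct and the $j_s'$ pairwise distinct; let $\mathcal{B}(l)$ be the set of all such diagrams, so $|\mathcal{B}(l)|=\frac{k_1!k_2!}{(k_1-l)!(k_2-l)!l!}$. For $\mathcal{N}\in\mathcal{B}(l)$, $(f\otimes g)_{\mathcal{N}}$ is the function of $k_1+k_2-l$ variables obtained from $f\otimes g$ by setting $x_{j_s}=x_{j_s'}$ for $s=1,\dots,l$ (for $l=0$ it is $f\otimes g$). Define $$F_l^{(n)}(f,g)=\Big(\frac{n}{a_n}\Big)^{(k_1+k_2)/2}\int_{E^{k_1+k_2-l}}\frac1{|\mathcal{B}(l)|}\sum_{\mathcal{N}\in\mathcal{B}(l)}(f\otimes g)_{\mathcal{N}}\,dP_n^{k_1+k_2-l}.$$ $\mu^k$, $P_n^k$ denote $k$-fold product measures. *)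

theory Defs
  imports "HOL-Probability.Probability" "HOL-Library.Landau_Symbols"
begin

text \<open>Variables are indexed from 0: f has variables 0..k1-1, g has variables 0..k2-1,
  and the tensor product f\<otimes>g has variables 0..k1+k2-1, the g-variables being k1..k1+k2-1.\<close>

definition nonatomic :: "'a measure \<Rightarrow> bool" where
  "nonatomic M \<longleftrightarrow> (\<forall>A\<in>sets M. 0 < emeasure M A \<longrightarrow>
     (\<exists>B\<in>sets M. B \<subseteq> A \<and> 0 < emeasure M B \<and> emeasure M B < emeasure M A))"

definition tensor :: "nat \<Rightarrow> nat \<Rightarrow> ((nat \<Rightarrow> 'a) \<Rightarrow> real) \<Rightarrow> ((nat \<Rightarrow> 'a) \<Rightarrow> real)
    \<Rightarrow> (nat \<Rightarrow> 'a) \<Rightarrow> real" where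
  "tensor k1 k2 f g x = f (restrict x {..<k1}) * g (\<lambda>i\<in>{..<k2}. x (k1 + i))"

definition diagrams :: "nat \<Rightarrow> nat \<Rightarrow> nat \<Rightarrow> (nat \<times> nat) set set" where
  "diagrams k1 k2 l = {N. N \<subseteq> {..<k1} \<times> {k1..<k1+k2} \<and> card N = l
      \<and> inj_on fst N \<and> inj_on snd N}"

definition rank :: "nat set \<Rightarrow> nat \<Rightarrow> nat" where
  "rank R i = card {r\<in>R. r < i}"

text \<open>(h)_N: function of k1+k2-l variables obtained by identifying x_{j'} with x_j for
  each edge (j,j') of N; the remaining variables (those not of the form j') are
  relabelled 0..k1+k2-l-1 in increasing order.\<close>
definition contract :: "nat \<Rightarrow> nat \<Rightarrow> (nat \<times> nat) set \<Rightarrow> ((nat \<Rightarrow> 'a) \<Rightarrow> real)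
    \<Rightarrow> (nat \<Rightarrow> 'a) \<Rightarrow> real" where
  "contract k1 k2 N h y =
     (let R = {..<k1+k2} - snd ` N in
      h (\<lambda>i\<in>{..<k1+k2}. if i \<in> snd ` N then y (rank R (THE j. (j, i) \<in> N))
                          else y (rank R i)))"

definition F_l :: "nat \<Rightarrow> nat \<Rightarrow> nat \<Rightarrow> real \<Rightarrow> real \<Rightarrow> 'a measure
    \<Rightarrow> ((nat \<Rightarrow> 'a) \<Rightarrow> real) \<Rightarrow> ((nat \<Rightarrow> 'a) \<Rightarrow> real) \<Rightarrow> real" where
  "F_l k1 k2 l nn an Pn f g =
     (nn / an) powr (real (k1 + k2) / 2) *
     integral\<^sup>L (PiM {..<k1+k2-l} (\<lambda>_. Pn))
       (\<lambda>y. (1 / real (card (diagrams k1 k2 l))) *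
            (\<Sum>N\<in>diagrams k1 k2 l. contract k1 k2 N (tensor k1 k2 f g) y))"

definition L2norm :: "'a measure \<Rightarrow> ('a \<Rightarrow> real) \<Rightarrow> real" where
  "L2norm M f = sqrt (integral\<^sup>L M (\<lambda>x. (f x)\<^sup>2))"

definition memL2 :: "'a measure \<Rightarrow> ('a \<Rightarrow> real) \<Rightarrow> bool" where
  "memL2 M f \<longleftrightarrow> f \<in> borel_measurable M \<and> integrable M (\<lambda>x. (f x)\<^sup>2)"

end

theory Submission
  imports Defs
begin

lemma nn_integral_mono_measure':
  assumes sets: "sets N = sets M" and le: "\<And>A. A \<in> sets M \<Longrightarrow> emeasure N A \<le> emeasure M A"
    and u: "u \<in> borel_measurable M"
  shows "(\<integral>\<^sup>+x. u x \<partial>N) \<le> (\<integral>\<^sup>+x. u x \<partial>M)"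
  using u
proof (induction rule: borel_measurable_induct)
  case (cong f g)
  have "(\<integral>\<^sup>+x. f x \<partial>N) = (\<integral>\<^sup>+x. g x \<partial>N)"
    using cong(3) sets_eq_imp_space_eq[OF sets] by (intro nn_integral_cong) auto
  moreover have "(\<integral>\<^sup>+x. f x \<partial>M) = (\<integral>\<^sup>+x. g x \<partial>M)"
    using cong(3) by (intro nn_integral_cong) auto
  ultimately show ?case using cong by simp
next
  case (set A)
  have "A \<in> sets N" using set sets by simp
  then have "(\<integral>\<^sup>+x. indicator A x \<partial>N) = emeasure N A" by (rule nn_integral_indicator)
  also have "\<dots> \<le> emeasure M A" using set by (rule le)
  also have "\<dots> = (\<integral>\<^sup>+x. indicator A x \<partial>M)" using set by (rule nn_integral_indicator[symmetric])
  finally show ?case .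
next
  case (mult u c)
  have "(\<integral>\<^sup>+x. c * u x \<partial>N) = c * (\<integral>\<^sup>+x. u x \<partial>N)"
    using mult sets by (intro nn_integral_cmult) (simp add: measurable_cong_sets[OF sets refl])
  also have "\<dots> \<le> c * (\<integral>\<^sup>+x. u x \<partial>M)" using mult by (intro mult_left_mono) auto
  also have "\<dots> = (\<integral>\<^sup>+x. c * u x \<partial>M)"
    using mult by (intro nn_integral_cmult[symmetric]) auto
  finally show ?case .
next
  case (add u v)
  have mN: "u \<in> borel_measurable N" "v \<in> borel_measurable N"
    using add sets by (simp_all add: measurable_cong_sets[OF sets refl])
  have "(\<integral>\<^sup>+x. v x + u x \<partial>N) = (\<integral>\<^sup>+x. v x \<partial>N) + (\<integral>\<^sup>+x. u x \<partial>N)"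
    using mN by (intro nn_integral_add) auto
  also have "\<dots> \<le> (\<integral>\<^sup>+x. v x \<partial>M) + (\<integral>\<^sup>+x. u x \<partial>M)" using add by (intro add_mono) auto
  also have "\<dots> = (\<integral>\<^sup>+x. v x + u x \<partial>M)"
    using add by (intro nn_integral_add[symmetric]) auto
  finally show ?case .
next
  case (seq U)
  have mN: "\<And>i. U i \<in> borel_measurable N"
    using seq sets by (simp_all add: measurable_cong_sets[OF sets refl])
  have "(\<integral>\<^sup>+x. (SUP i. U i) x \<partial>N) = (SUP i. (\<integral>\<^sup>+x. U i x \<partial>N))"
    unfolding SUP_apply by (rule nn_integral_monotone_convergence_SUP[OF \<open>incseq U\<close> mN])
  also have "\<dots> \<le> (SUP i. (\<integral>\<^sup>+x. U i x \<partial>M))" by (rule SUP_mono) (use seq in blast)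
  also have "\<dots> = (\<integral>\<^sup>+x. (SUP i. U i) x \<partial>M)"
    unfolding SUP_apply by (rule nn_integral_monotone_convergence_SUP[OF \<open>incseq U\<close> seq(1), symmetric])
  finally show ?case .
qed

lemma PiM_scale_le:
  assumes sfP: "sigma_finite_measure P" and sfM: "sigma_finite_measure M"
    and sets: "sets P = sets M"
    and le: "\<And>A. A \<in> sets M \<Longrightarrow> c * emeasure P A \<le> emeasure M A"
    and I: "finite I"
  shows "u \<in> borel_measurable (PiM I (\<lambda>_. M)) \<Longrightarrow>
     c ^ card I * (\<integral>\<^sup>+x. u x \<partial>PiM I (\<lambda>_. P)) \<le> (\<integral>\<^sup>+x. u x \<partial>PiM I (\<lambda>_. M))"
  using I
proof (induction I arbitrary: u rule: finite_induct)
  case empty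
  have e: "PiM {} (\<lambda>_. P) = PiM {} (\<lambda>_. M)" by (simp only: PiM_empty)
  show ?case by (simp add: e)
next
  case (insert i I)
  interpret pP: product_sigma_finite "\<lambda>_. P" using sfP by (simp add: product_sigma_finite_def)
  interpret pM: product_sigma_finite "\<lambda>_. M" using sfM by (simp add: product_sigma_finite_def)
  have sPi: "\<And>J. sets (PiM J (\<lambda>_. P)) = sets (PiM J (\<lambda>_. M))"
    using sets by (intro sets_PiM_cong) auto
  note um[measurable] = insert.prems
  have umP: "u \<in> borel_measurable (PiM (insert i I) (\<lambda>_. P))"
    using um by (simp add: measurable_cong_sets[OF sPi refl])
  have single: "c * (\<integral>\<^sup>+y. h y \<partial>P) \<le> (\<integral>\<^sup>+y. h y \<partial>M)" if "h \<in> borel_measurable M" for h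
  proof -
    have "c * (\<integral>\<^sup>+y. h y \<partial>P) = (\<integral>\<^sup>+y. h y \<partial>scale_measure c P)"
      using that by (simp add: nn_integral_scale_measure measurable_cong_sets[OF sets refl])
    also have "\<dots> \<le> (\<integral>\<^sup>+y. h y \<partial>M)"
      using that sets le by (intro nn_integral_mono_measure') auto
    finally show ?thesis .
  qed
  have m1: "(\<lambda>x. \<integral>\<^sup>+y. u (x(i := y)) \<partial>M) \<in> borel_measurable (PiM I (\<lambda>_. M))"
    by measurable
  have "c ^ card (insert i I) * (\<integral>\<^sup>+x. u x \<partial>PiM (insert i I) (\<lambda>_. P))
     = c ^ card I * (\<integral>\<^sup>+x. c * (\<integral>\<^sup>+y. u (x(i := y)) \<partial>P) \<partial>PiM I (\<lambda>_. P))"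
    using insert umP
    by (simp add: pP.product_nn_integral_insert nn_integral_cmult mult_ac)
  also have "\<dots> \<le> c ^ card I * (\<integral>\<^sup>+x. (\<integral>\<^sup>+y. u (x(i := y)) \<partial>M) \<partial>PiM I (\<lambda>_. P))"
  proof (intro mult_left_mono nn_integral_mono single)
    fix x assume "x \<in> space (PiM I (\<lambda>_. P))"
    then have "x \<in> space (PiM I (\<lambda>_. M))" using sPi sets_eq_imp_space_eq by blast
    then show "(\<lambda>y. u (x(i := y))) \<in> borel_measurable M" by measurable
  qed auto
  also have "\<dots> \<le> (\<integral>\<^sup>+x. (\<integral>\<^sup>+y. u (x(i := y)) \<partial>M) \<partial>PiM I (\<lambda>_. M))"
    using insert.IH m1 by blast
  also have "\<dots> = (\<integral>\<^sup>+x. u x \<partial>PiM (insert i I) (\<lambda>_. M))"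
    using insert um by (simp add: pM.product_nn_integral_insert)
  finally show ?case .
qed

lemma reindex_meas:
  assumes "\<sigma> \<in> I \<rightarrow> K"
  shows "(\<lambda>y. \<lambda>i\<in>I. y (\<sigma> i)) \<in> measurable (PiM K (\<lambda>_. P)) (PiM I (\<lambda>_. P))"
  using assms by (intro measurable_restrict measurable_component_singleton) auto

lemma reindex_nn:
  assumes P: "prob_space P" and inj: "inj_on \<sigma> I" and s: "\<sigma> \<in> I \<rightarrow> K"
    and h: "h \<in> borel_measurable (PiM I (\<lambda>_. P))"
  shows "(\<integral>\<^sup>+y. h (\<lambda>i\<in>I. y (\<sigma> i)) \<partial>PiM K (\<lambda>_. P)) = (\<integral>\<^sup>+x. h x \<partial>PiM I (\<lambda>_. P))"
proof -
  have d: "distr (PiM K (\<lambda>_. P)) (PiM I (\<lambda>_. P)) (\<lambda>y. \<lambda>i\<in>I. y (\<sigma> i)) = PiM I (\<lambda>_. P)"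
    using distr_PiM_reindex[of K "\<lambda>_. P" \<sigma> I] P inj s by simp
  have "(\<integral>\<^sup>+x. h x \<partial>PiM I (\<lambda>_. P)) = (\<integral>\<^sup>+x. h x \<partial>distr (PiM K (\<lambda>_. P)) (PiM I (\<lambda>_. P)) (\<lambda>y. \<lambda>i\<in>I. y (\<sigma> i)))"
    by (simp only: d)
  also have "\<dots> = (\<integral>\<^sup>+y. h (\<lambda>i\<in>I. y (\<sigma> i)) \<partial>PiM K (\<lambda>_. P))"
    by (rule nn_integral_distr[OF reindex_meas[OF s]]) (simp add: h)
  finally show ?thesis by (rule sym)
qed

lemma rank_lt: assumes "finite R" "r \<in> R" shows "rank R r < card R"
  unfolding rank_def using assms by (intro psubset_card_mono) auto

lemma rank_inj: assumes "finite R" shows "inj_on (rank R) R"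
proof (rule inj_onI)
  have lt: "rank R r < rank R r'" if "r \<in> R" "r' \<in> R" "r < r'" for r r'
    unfolding rank_def using assms that by (intro psubset_card_mono) auto
  fix r r' assume "r \<in> R" "r' \<in> R" "rank R r = rank R r'"
  then show "r = r'" using lt[of r r'] lt[of r' r] by (cases r r' rule: linorder_cases) auto
qed

lemma diag_sigma:
  fixes f g :: "(nat \<Rightarrow> 'a) \<Rightarrow> real"
  assumes N: "N \<in> diagrams k1 k2 l"
  obtains \<sigma> where "\<sigma> \<in> {..<k1} \<rightarrow> {..<k1+k2-l}" "inj_on \<sigma> {..<k1}"
    "(\<lambda>i. \<sigma> (k1+i)) \<in> {..<k2} \<rightarrow> {..<k1+k2-l}" "inj_on (\<lambda>i. \<sigma> (k1+i)) {..<k2}"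
    "\<And>y. contract k1 k2 N (tensor k1 k2 f g) y
        = f (\<lambda>i\<in>{..<k1}. y (\<sigma> i)) * g (\<lambda>i\<in>{..<k2}. y (\<sigma> (k1+i)))"
proof -
  have Nsub: "N \<subseteq> {..<k1} \<times> {k1..<k1+k2}" and cN: "card N = l"
    and ifst: "inj_on fst N" and isnd: "inj_on snd N"
    using N by (auto simp: diagrams_def)
  have finN: "finite N" using Nsub by (rule finite_subset) auto
  define R where "R = {..<k1+k2} - snd ` N"
  define \<tau> where "\<tau> = (\<lambda>i. if i \<in> snd ` N then (THE j. (j, i) \<in> N) else i)"
  have finR: "finite R" by (simp add: R_def)
  have cR: "card R = k1+k2-l"
  proof -
    have "card (snd ` N) = l" using isnd cN by (simp add: card_image)
    moreover have "snd ` N \<subseteq> {..<k1+k2}" using Nsub by auto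
    ultimately show ?thesis unfolding R_def using finN
      by (subst card_Diff_subset) auto
  qed
  have tauN: "(\<tau> i, i) \<in> N" if i: "i \<in> snd ` N" for i
  proof -
    obtain j where j: "(j, i) \<in> N" using i by force
    have "(THE j. (j, i) \<in> N) = j"
    proof (rule the_equality)
      fix j' assume jp: "(j', i) \<in> N"
      have "(j', i) = (j, i)" by (rule inj_onD[OF isnd]) (use j jp in auto)
      then show "j' = j" by simp
    qed (rule j)
    then show ?thesis using j i by (simp add: \<tau>_def)
  qed
  have tauR: "\<tau> i \<in> R" if "i < k1+k2" for i
  proof (cases "i \<in> snd ` N")
    case True
    then have "(\<tau> i, i) \<in> N" by (rule tauN)
    then have "\<tau> i < k1" using Nsub by auto
    moreover have "\<tau> i \<notin> snd ` N" using Nsub \<open>\<tau> i < k1\<close> by force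
    ultimately show ?thesis by (simp add: R_def)
  next
    case False
    then show ?thesis using that by (simp add: R_def \<tau>_def)
  qed
  have tau_low: "\<tau> i = i" if "i < k1" for i
  proof -
    have "i \<notin> snd ` N" using Nsub that by force
    then show ?thesis by (simp add: \<tau>_def)
  qed
  have tau_inj: "inj_on \<tau> {k1..<k1+k2}"
  proof (rule inj_onI)
    fix i i' assume i: "i \<in> {k1..<k1+k2}" and i': "i' \<in> {k1..<k1+k2}" and eq: "\<tau> i = \<tau> i'"
    show "i = i'"
    proof (cases "i \<in> snd ` N"; cases "i' \<in> snd ` N")
      assume a: "i \<in> snd ` N" "i' \<in> snd ` N"
      have p: "(\<tau> i, i) \<in> N" "(\<tau> i, i') \<in> N" using tauN[OF a(1)] tauN[OF a(2)] eq by simp_all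
      have "(\<tau> i, i) = (\<tau> i, i')" by (rule inj_onD[OF ifst]) (use p in auto)
      then show ?thesis by simp
    next
      assume a: "i \<in> snd ` N" "i' \<notin> snd ` N"
      then have "(\<tau> i, i) \<in> N" using tauN by auto
      then have "\<tau> i < k1" using Nsub by auto
      moreover have "\<tau> i' = i'" using a by (simp add: \<tau>_def)
      ultimately show ?thesis using eq i' by auto
    next
      assume a: "i \<notin> snd ` N" "i' \<in> snd ` N"
      then have "(\<tau> i', i') \<in> N" using tauN by auto
      then have "\<tau> i' < k1" using Nsub by auto
      moreover have "\<tau> i = i" using a by (simp add: \<tau>_def)
      ultimately show ?thesis using eq i by auto
    next
      assume a: "i \<notin> snd ` N" "i' \<notin> snd ` N"
      then show ?thesis using eq by (simp add: \<tau>_def)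
    qed
  qed
  define \<sigma> where "\<sigma> = (\<lambda>i. rank R (\<tau> i))"
  show ?thesis
  proof
    show "\<sigma> \<in> {..<k1} \<rightarrow> {..<k1+k2-l}"
      using rank_lt[OF finR] tauR cR by (auto simp: \<sigma>_def)
    show "(\<lambda>i. \<sigma> (k1+i)) \<in> {..<k2} \<rightarrow> {..<k1+k2-l}"
      using rank_lt[OF finR] tauR cR by (auto simp: \<sigma>_def)
    show "inj_on \<sigma> {..<k1}"
    proof (rule inj_onI)
      fix i i' assume a: "i \<in> {..<k1}" "i' \<in> {..<k1}" "\<sigma> i = \<sigma> i'"
      have "\<tau> i = \<tau> i'"
        by (rule inj_onD[OF rank_inj[OF finR]]) (use a tauR in \<open>auto simp: \<sigma>_def\<close>)
      then show "i = i'" using a tau_low by simp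
    qed
    show "inj_on (\<lambda>i. \<sigma> (k1+i)) {..<k2}"
    proof (rule inj_onI)
      fix i i' assume a: "i \<in> {..<k2}" "i' \<in> {..<k2}" "\<sigma> (k1+i) = \<sigma> (k1+i')"
      have "\<tau> (k1+i) = \<tau> (k1+i')"
        by (rule inj_onD[OF rank_inj[OF finR]]) (use a tauR in \<open>auto simp: \<sigma>_def\<close>)
      then have "k1+i = k1+i'" by (rule inj_onD[OF tau_inj]) (use a in auto)
      then show "i = i'" by simp
    qed
    fix y :: "nat \<Rightarrow> 'a"
    have inner: "(\<lambda>i\<in>{..<k1+k2}. if i \<in> snd ` N then y (rank R (THE j. (j, i) \<in> N)) else y (rank R i))
       = (\<lambda>i\<in>{..<k1+k2}. y (\<sigma> i))"
      by (auto simp: \<sigma>_def \<tau>_def)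
    have r1: "restrict (\<lambda>i\<in>{..<k1+k2}. y (\<sigma> i)) {..<k1} = (\<lambda>i\<in>{..<k1}. y (\<sigma> i))"
      by auto
    have r2: "(\<lambda>i\<in>{..<k2}. (\<lambda>i\<in>{..<k1+k2}. y (\<sigma> i)) (k1 + i)) = (\<lambda>i\<in>{..<k2}. y (\<sigma> (k1+i)))"
      by auto
    show "contract k1 k2 N (tensor k1 k2 f g) y
        = f (\<lambda>i\<in>{..<k1}. y (\<sigma> i)) * g (\<lambda>i\<in>{..<k2}. y (\<sigma> (k1+i)))"
      unfolding contract_def Let_def R_def[symmetric] inner tensor_def r1 r2 ..
  qed
qed

lemma ennreal_sq_lt: fixes a b :: ennreal assumes ba: "b < a" shows "b^2 < a^2"
proof -
  obtain x where x: "b = ennreal x" "0 \<le> x" using ba by (cases b rule: ennreal_cases) auto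
  show ?thesis
  proof (cases a rule: ennreal_cases)
    case (real y)
    then have "x < y" using ba x by (simp add: ennreal_less_iff)
    then have "x^2 < y^2" using x by (intro power_strict_mono) auto
    then have "ennreal (x^2) < ennreal (y^2)" using x by (simp add: ennreal_less_iff)
    then show ?thesis using x real by (simp add: ennreal_power)
  next
    case top
    then show ?thesis using x by (simp add: ennreal_power)
  qed
qed

lemma ennreal_sq_le: fixes a b :: ennreal assumes "a^2 \<le> b^2" shows "a \<le> b"
proof (rule ccontr)
  assume "\<not> a \<le> b"
  then have "b < a" by simp
  then have "b^2 < a^2" by (rule ennreal_sq_lt)
  then show False using assms by simp
qed

lemma one_side:
  fixes f :: "(nat \<Rightarrow> 'a) \<Rightarrow> real"
  assumes Pp: "prob_space Pp" and sfM: "sigma_finite_measure M" and sets: "sets Pp = sets M"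
    and c: "0 < c" and le: "\<And>A. A \<in> sets M \<Longrightarrow> ennreal c * emeasure Pp A \<le> emeasure M A"
    and s: "\<sigma> \<in> {..<k} \<rightarrow> K" and i: "inj_on \<sigma> {..<k}"
    and f: "memL2 (PiM {..<k} (\<lambda>_. M)) f"
  shows "(\<lambda>y. f (\<lambda>i\<in>{..<k}. y (\<sigma> i))) \<in> borel_measurable (PiM K (\<lambda>_. Pp))"
    and "ennreal (c ^ k) * (\<integral>\<^sup>+y. ennreal ((f (\<lambda>i\<in>{..<k}. y (\<sigma> i)))^2) \<partial>PiM K (\<lambda>_. Pp))
           \<le> ennreal ((L2norm (PiM {..<k} (\<lambda>_. M)) f)^2)"
proof -
  have sPi: "sets (PiM {..<k} (\<lambda>_. Pp)) = sets (PiM {..<k} (\<lambda>_. M))"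
    by (intro sets_PiM_cong) (auto simp: sets)
  have fM: "f \<in> borel_measurable (PiM {..<k} (\<lambda>_. M))" and fi: "integrable (PiM {..<k} (\<lambda>_. M)) (\<lambda>x. (f x)^2)"
    using f by (auto simp: memL2_def)
  have fm: "f \<in> borel_measurable (PiM {..<k} (\<lambda>_. Pp))"
    using fM by (simp add: measurable_cong_sets[OF sPi refl])
  show "(\<lambda>y. f (\<lambda>i\<in>{..<k}. y (\<sigma> i))) \<in> borel_measurable (PiM K (\<lambda>_. Pp))"
    using measurable_comp[OF reindex_meas[OF s] fm] by (simp add: comp_def)
  have hm: "(\<lambda>x. ennreal ((f x)^2)) \<in> borel_measurable (PiM {..<k} (\<lambda>_. Pp))"
    using fm by measurable
  have hM: "(\<lambda>x. ennreal ((f x)^2)) \<in> borel_measurable (PiM {..<k} (\<lambda>_. M))"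
    using fM by measurable
  have sfP: "sigma_finite_measure Pp"
    using Pp by (simp add: prob_space_imp_sigma_finite)
  have "ennreal (c ^ k) * (\<integral>\<^sup>+y. ennreal ((f (\<lambda>i\<in>{..<k}. y (\<sigma> i)))^2) \<partial>PiM K (\<lambda>_. Pp))
      = ennreal c ^ card {..<k} * (\<integral>\<^sup>+x. ennreal ((f x)^2) \<partial>PiM {..<k} (\<lambda>_. Pp))"
    using reindex_nn[OF Pp i s hm] c by (simp add: ennreal_power)
  also have "\<dots> \<le> (\<integral>\<^sup>+x. ennreal ((f x)^2) \<partial>PiM {..<k} (\<lambda>_. M))"
    by (rule PiM_scale_le[OF sfP sfM sets le _ hM]) auto
  also have "\<dots> = ennreal (integral\<^sup>L (PiM {..<k} (\<lambda>_. M)) (\<lambda>x. (f x)^2))"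
    by (rule nn_integral_eq_integral[OF fi]) auto
  also have "integral\<^sup>L (PiM {..<k} (\<lambda>_. M)) (\<lambda>x. (f x)^2) = (L2norm (PiM {..<k} (\<lambda>_. M)) f)^2"
    unfolding L2norm_def by (subst real_sqrt_pow2) (auto intro: integral_nonneg)
  finally show "ennreal (c ^ k) * (\<integral>\<^sup>+y. ennreal ((f (\<lambda>i\<in>{..<k}. y (\<sigma> i)))^2) \<partial>PiM K (\<lambda>_. Pp))
           \<le> ennreal ((L2norm (PiM {..<k} (\<lambda>_. M)) f)^2)" .
qed

lemma L2norm_nonneg: "0 \<le> L2norm M f"
  unfolding L2norm_def by (auto intro: integral_nonneg)

lemma pair_bound:
  fixes f g :: "(nat \<Rightarrow> 'a) \<Rightarrow> real"
  assumes Pp: "prob_space Pp" and sfM: "sigma_finite_measure M" and sets: "sets Pp = sets M"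
    and c: "0 < c" and le: "\<And>A. A \<in> sets M \<Longrightarrow> ennreal c * emeasure Pp A \<le> emeasure M A"
    and s1: "\<sigma>1 \<in> {..<k1} \<rightarrow> K" and i1: "inj_on \<sigma>1 {..<k1}"
    and s2: "\<sigma>2 \<in> {..<k2} \<rightarrow> K" and i2: "inj_on \<sigma>2 {..<k2}"
    and f: "memL2 (PiM {..<k1} (\<lambda>_. M)) f" and g: "memL2 (PiM {..<k2} (\<lambda>_. M)) g"
  shows "ennreal (c powr (real (k1+k2)/2)) *
      (\<integral>\<^sup>+y. ennreal \<bar>f (\<lambda>i\<in>{..<k1}. y (\<sigma>1 i)) * g (\<lambda>i\<in>{..<k2}. y (\<sigma>2 i))\<bar> \<partial>PiM K (\<lambda>_. Pp))
    \<le> ennreal (L2norm (PiM {..<k1} (\<lambda>_. M)) f * L2norm (PiM {..<k2} (\<lambda>_. M)) g)"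
proof -
  define Q where "Q = PiM K (\<lambda>_. Pp)"
  define F where "F = (\<lambda>y. f (\<lambda>i\<in>{..<k1}. y (\<sigma>1 i)))"
  define G where "G = (\<lambda>y. g (\<lambda>i\<in>{..<k2}. y (\<sigma>2 i)))"
  define Lf where "Lf = L2norm (PiM {..<k1} (\<lambda>_. M)) f"
  define Lg where "Lg = L2norm (PiM {..<k2} (\<lambda>_. M)) g"
  note A1 = one_side[OF Pp sfM sets c le s1 i1 f, folded F_def Q_def Lf_def]
  note A2 = one_side[OF Pp sfM sets c le s2 i2 g, folded G_def Q_def Lg_def]
  have Fm[measurable]: "F \<in> borel_measurable Q" using A1(1) .
  have Gm[measurable]: "G \<in> borel_measurable Q" using A2(1) .
  define X where "X = (\<integral>\<^sup>+y. ennreal \<bar>F y * G y\<bar> \<partial>Q)"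
  define A where "A = (\<integral>\<^sup>+y. ennreal ((F y)^2) \<partial>Q)"
  define B where "B = (\<integral>\<^sup>+y. ennreal ((G y)^2) \<partial>Q)"
  have "X^2 = (\<integral>\<^sup>+y. ennreal \<bar>F y\<bar> * ennreal \<bar>G y\<bar> \<partial>Q)^2"
    unfolding X_def by (simp add: abs_mult ennreal_mult)
  also have "\<dots> \<le> (\<integral>\<^sup>+y. (ennreal \<bar>F y\<bar>)^2 \<partial>Q) * (\<integral>\<^sup>+y. (ennreal \<bar>G y\<bar>)^2 \<partial>Q)"
    by (rule Cauchy_Schwarz_nn_integral) measurable
  also have "\<dots> = A * B"
    unfolding A_def B_def by (simp add: ennreal_power)
  finally have XAB: "X^2 \<le> A * B" .
  have cp: "(c powr (real (k1+k2)/2))^2 = c^k1 * c^k2"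
  proof -
    have e: "real (k1+k2)/2 * real 2 = real (k1+k2)" by simp
    have "(c powr (real (k1+k2)/2))^2 = (c powr (real (k1+k2)/2)) powr (real 2)"
      using c by (simp add: powr_realpow)
    also have "\<dots> = c powr (real (k1+k2)/2 * real 2)" by (rule powr_powr)
    also have "\<dots> = c powr (real (k1+k2))" by (simp only: e)
    also have "\<dots> = c^(k1+k2)" using c by (rule powr_realpow)
    finally show ?thesis by (simp add: power_add)
  qed
  have "(ennreal (c powr (real (k1+k2)/2)) * X)^2 = ennreal (c^k1) * ennreal (c^k2) * X^2"
    using c cp by (simp add: power_mult_distrib ennreal_power ennreal_mult)
  also have "\<dots> \<le> ennreal (c^k1) * ennreal (c^k2) * (A * B)"
    by (intro mult_left_mono XAB) auto
  also have "\<dots> = (ennreal (c^k1) * A) * (ennreal (c^k2) * B)"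
    by (simp add: mult_ac)
  also have "\<dots> \<le> ennreal (Lf^2) * ennreal (Lg^2)"
    using A1(2) A2(2) unfolding A_def B_def F_def G_def by (intro mult_mono) auto
  also have "\<dots> = (ennreal (Lf * Lg))^2"
    using L2norm_nonneg[of _ f] L2norm_nonneg[of _ g]
    by (simp add: Lf_def Lg_def ennreal_power ennreal_mult power_mult_distrib)
  finally have "(ennreal (c powr (real (k1+k2)/2)) * X)^2 \<le> (ennreal (Lf * Lg))^2" .
  then have "ennreal (c powr (real (k1+k2)/2)) * X \<le> ennreal (Lf * Lg)"
    by (rule ennreal_sq_le)
  then show ?thesis unfolding X_def Q_def F_def G_def Lf_def Lg_def .
qed

theorem lemma5:
  fixes M :: "'a measure" and a :: "nat \<Rightarrow> real" and P :: "nat \<Rightarrow> 'a measure"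
    and k1 k2 l n :: nat and f g :: "(nat \<Rightarrow> 'a) \<Rightarrow> real"
  assumes sf: "sigma_finite_measure M"
    and na: "nonatomic M"
    and inf: "emeasure M (space M) = \<infinity>"
    and apos: "\<And>m. m \<ge> 1 \<Longrightarrow> a m > 0"
    and atop: "filterlim a at_top sequentially"
    and asmall: "a \<in> o(\<lambda>m. real m)"
    and Pprob: "\<And>m. m \<ge> 1 \<Longrightarrow> prob_space (P m)"
    and Psets: "\<And>m. m \<ge> 1 \<Longrightarrow> sets (P m) = sets M"
    and Pmono: "\<And>m B. m \<ge> 1 \<Longrightarrow> B \<in> sets M \<Longrightarrow>
        ennreal (real m / a m) * emeasure (P m) B
          \<le> ennreal (real (Suc m) / a (Suc m)) * emeasure (P (Suc m)) B"
    and Plim: "\<And>B. B \<in> sets M \<Longrightarrow>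
        ((\<lambda>m. ennreal (real m / a m) * emeasure (P m) B) \<longlongrightarrow> emeasure M B) sequentially"
    and k1: "k1 \<ge> 1" and k2: "k2 \<ge> 1"
    and f: "memL2 (PiM {..<k1} (\<lambda>_. M)) f"
    and g: "memL2 (PiM {..<k2} (\<lambda>_. M)) g"
    and l: "l \<le> min k1 k2"
    and n: "n \<ge> 1"
  shows "\<bar>F_l k1 k2 l (real n) (a n) (P n) f g\<bar>
           \<le> L2norm (PiM {..<k1} (\<lambda>_. M)) f * L2norm (PiM {..<k2} (\<lambda>_. M)) g"
proof -
  define c where "c = real n / a n"
  have c: "0 < c" using apos[OF n] n by (simp add: c_def)
  have Pp: "prob_space (P n)" using Pprob[OF n] .
  have sets: "sets (P n) = sets M" using Psets[OF n] .
  have le: "ennreal c * emeasure (P n) B \<le> emeasure M B" if B: "B \<in> sets M" for B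
  proof -
    define X where "X m = ennreal (real m / a m) * emeasure (P m) B" for m
    have mono: "X n \<le> X m" if "n \<le> m" for m
      using that
    proof (induction m rule: dec_induct)
      case base
      then show ?case by simp
    next
      case (step m)
      have "X m \<le> X (Suc m)" unfolding X_def using Pmono[OF _ B, of m] step n by simp
      then show ?case using step by (meson order_trans)
    qed
    have "X \<longlonglongrightarrow> emeasure M B" using Plim[OF B] unfolding X_def .
    then have "X n \<le> emeasure M B"
      by (rule LIMSEQ_le_const) (use mono in blast)
    then show ?thesis by (simp add: X_def c_def)
  qed
  define D where "D = diagrams k1 k2 l"
  define m' where "m' = k1+k2-l"
  define Q where "Q = PiM {..<m'} (\<lambda>_. P n)"
  define h where "h N y = contract k1 k2 N (tensor k1 k2 f g) y" for N y
  define H where "H y = 1 / real (card D) * (\<Sum>N\<in>D. h N y)" for y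
  define s where "s = c powr (real (k1+k2)/2)"
  define Lf where "Lf = L2norm (PiM {..<k1} (\<lambda>_. M)) f"
  define Lg where "Lg = L2norm (PiM {..<k2} (\<lambda>_. M)) g"
  have LL: "0 \<le> Lf * Lg" using L2norm_nonneg[of _ f] L2norm_nonneg[of _ g] by (simp add: Lf_def Lg_def)
  have FL: "F_l k1 k2 l (real n) (a n) (P n) f g = s * integral\<^sup>L Q H"
    unfolding F_l_def s_def c_def Q_def H_def h_def D_def m'_def ..
  have finD: "finite D"
  proof -
    have "D \<subseteq> Pow ({..<k1} \<times> {k1..<k1+k2})" by (auto simp: D_def diagrams_def)
    then show ?thesis by (rule finite_subset) auto
  qed
  have "\<forall>N\<in>D. \<exists>\<sigma>. \<sigma> \<in> {..<k1} \<rightarrow> {..<m'} \<and> inj_on \<sigma> {..<k1} \<and>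
      (\<lambda>i. \<sigma> (k1+i)) \<in> {..<k2} \<rightarrow> {..<m'} \<and> inj_on (\<lambda>i. \<sigma> (k1+i)) {..<k2} \<and>
      (\<forall>y. h N y = f (\<lambda>i\<in>{..<k1}. y (\<sigma> i)) * g (\<lambda>i\<in>{..<k2}. y (\<sigma> (k1+i))))"
  proof
    fix N assume "N \<in> D"
    then obtain \<sigma> where "\<sigma> \<in> {..<k1} \<rightarrow> {..<k1+k2-l}" "inj_on \<sigma> {..<k1}"
      "(\<lambda>i. \<sigma> (k1+i)) \<in> {..<k2} \<rightarrow> {..<k1+k2-l}" "inj_on (\<lambda>i. \<sigma> (k1+i)) {..<k2}"
      "\<And>y. contract k1 k2 N (tensor k1 k2 f g) y
        = f (\<lambda>i\<in>{..<k1}. y (\<sigma> i)) * g (\<lambda>i\<in>{..<k2}. y (\<sigma> (k1+i)))"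
      unfolding D_def by (rule diag_sigma[where f=f and g=g]) blast+
    then show "\<exists>\<sigma>. \<sigma> \<in> {..<k1} \<rightarrow> {..<m'} \<and> inj_on \<sigma> {..<k1} \<and>
      (\<lambda>i. \<sigma> (k1+i)) \<in> {..<k2} \<rightarrow> {..<m'} \<and> inj_on (\<lambda>i. \<sigma> (k1+i)) {..<k2} \<and>
      (\<forall>y. h N y = f (\<lambda>i\<in>{..<k1}. y (\<sigma> i)) * g (\<lambda>i\<in>{..<k2}. y (\<sigma> (k1+i))))"
      unfolding h_def m'_def by blast
  qed
  then obtain S where S: "\<And>N. N \<in> D \<Longrightarrow> S N \<in> {..<k1} \<rightarrow> {..<m'} \<and> inj_on (S N) {..<k1} \<and>
      (\<lambda>i. S N (k1+i)) \<in> {..<k2} \<rightarrow> {..<m'} \<and> inj_on (\<lambda>i. S N (k1+i)) {..<k2} \<and>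
      (\<forall>y. h N y = f (\<lambda>i\<in>{..<k1}. y (S N i)) * g (\<lambda>i\<in>{..<k2}. y (S N (k1+i))))"
    by metis
  have hN: "ennreal s * (\<integral>\<^sup>+y. ennreal \<bar>h N y\<bar> \<partial>Q) \<le> ennreal (Lf * Lg)"
    and hm: "h N \<in> borel_measurable Q" if N: "N \<in> D" for N
  proof -
    note SN = S[OF N]
    have eq: "h N = (\<lambda>y. f (\<lambda>i\<in>{..<k1}. y (S N i)) * g (\<lambda>i\<in>{..<k2}. y (S N (k1+i))))"
      using SN by blast
    show "ennreal s * (\<integral>\<^sup>+y. ennreal \<bar>h N y\<bar> \<partial>Q) \<le> ennreal (Lf * Lg)"
      unfolding eq s_def Q_def Lf_def Lg_def
      by (rule pair_bound[OF Pp sf sets c le]) (use SN f g in auto)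
    have m1: "(\<lambda>y. f (\<lambda>i\<in>{..<k1}. y (S N i))) \<in> borel_measurable Q"
      unfolding Q_def by (rule one_side(1)[OF Pp sf sets c le _ _ f]) (use SN in auto)
    have m2: "(\<lambda>y. g (\<lambda>i\<in>{..<k2}. y (S N (k1+i)))) \<in> borel_measurable Q"
      unfolding Q_def by (rule one_side(1)[OF Pp sf sets c le _ _ g]) (use SN in auto)
    show "h N \<in> borel_measurable Q"
      unfolding eq using m1 m2 by measurable
  qed
  show ?thesis
  proof (cases "integrable Q H")
    case False
    then show ?thesis using FL LL by (simp add: Lf_def Lg_def not_integrable_integral_eq)
  next
    case True
    have ms: "(\<lambda>y. ennreal \<bar>h N y\<bar>) \<in> borel_measurable Q" if "N \<in> D" for N
      using hm[OF that] by measurable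
    have "ennreal \<bar>integral\<^sup>L Q H\<bar> \<le> (\<integral>\<^sup>+y. ennreal \<bar>H y\<bar> \<partial>Q)"
      using integral_norm_bound_ennreal[OF True] by simp
    also have "\<dots> \<le> (\<integral>\<^sup>+y. ennreal (1 / real (card D)) * (\<Sum>N\<in>D. ennreal \<bar>h N y\<bar>) \<partial>Q)"
    proof (rule nn_integral_mono)
      fix y
      have "\<bar>H y\<bar> \<le> 1 / real (card D) * (\<Sum>N\<in>D. \<bar>h N y\<bar>)"
        unfolding H_def by (simp add: abs_mult sum_abs divide_right_mono)
      then have "ennreal \<bar>H y\<bar> \<le> ennreal (1 / real (card D) * (\<Sum>N\<in>D. \<bar>h N y\<bar>))"
        by (rule ennreal_leI)
      also have "\<dots> = ennreal (1 / real (card D)) * (\<Sum>N\<in>D. ennreal \<bar>h N y\<bar>)"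
        by (subst ennreal_mult) (simp_all add: sum_nonneg)
      finally show "ennreal \<bar>H y\<bar> \<le> ennreal (1 / real (card D)) * (\<Sum>N\<in>D. ennreal \<bar>h N y\<bar>)" .
    qed
    also have "\<dots> = ennreal (1 / real (card D)) * (\<integral>\<^sup>+y. (\<Sum>N\<in>D. ennreal \<bar>h N y\<bar>) \<partial>Q)"
      by (rule nn_integral_cmult) (use ms in \<open>auto intro!: borel_measurable_sum\<close>)
    also have "(\<integral>\<^sup>+y. (\<Sum>N\<in>D. ennreal \<bar>h N y\<bar>) \<partial>Q) = (\<Sum>N\<in>D. (\<integral>\<^sup>+y. ennreal \<bar>h N y\<bar> \<partial>Q))"
      by (rule nn_integral_sum) (use ms in auto)
    finally have I1: "ennreal \<bar>integral\<^sup>L Q H\<bar> \<le> ennreal (1 / real (card D)) * (\<Sum>N\<in>D. (\<integral>\<^sup>+y. ennreal \<bar>h N y\<bar> \<partial>Q))" .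
    have "ennreal (s * \<bar>integral\<^sup>L Q H\<bar>) = ennreal s * ennreal \<bar>integral\<^sup>L Q H\<bar>"
      using c by (simp add: s_def ennreal_mult)
    also have "\<dots> \<le> ennreal s * (ennreal (1 / real (card D)) * (\<Sum>N\<in>D. (\<integral>\<^sup>+y. ennreal \<bar>h N y\<bar> \<partial>Q)))"
      by (intro mult_left_mono I1) auto
    also have "\<dots> = ennreal (1 / real (card D)) * (\<Sum>N\<in>D. ennreal s * (\<integral>\<^sup>+y. ennreal \<bar>h N y\<bar> \<partial>Q))"
      by (simp add: sum_distrib_left mult_ac)
    also have "\<dots> \<le> ennreal (1 / real (card D)) * (\<Sum>N\<in>D. ennreal (Lf * Lg))"
      by (intro mult_left_mono sum_mono hN) auto
    also have "\<dots> \<le> ennreal (Lf * Lg)"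
    proof (cases "card D = 0")
      case True
      then show ?thesis by simp
    next
      case False
      have sum_eq: "(\<Sum>N\<in>D. ennreal (Lf * Lg)) = ennreal (real (card D) * (Lf * Lg))"
        using LL by (simp add: ennreal_mult ennreal_of_nat_eq_real_of_nat)
      have "ennreal (1 / real (card D)) * (\<Sum>N\<in>D. ennreal (Lf * Lg))
          = ennreal (1 / real (card D)) * ennreal (real (card D) * (Lf * Lg))"
        by (simp only: sum_eq)
      also have "\<dots> = ennreal (1 / real (card D) * (real (card D) * (Lf * Lg)))"
        by (rule ennreal_mult[symmetric]) (use LL in auto)
      also have "\<dots> = ennreal (Lf * Lg)" using False by simp
      finally show ?thesis by simp
    qed
    finally have "s * \<bar>integral\<^sup>L Q H\<bar> \<le> Lf * Lg" using LL by simp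
    moreover have "\<bar>s * integral\<^sup>L Q H\<bar> = s * \<bar>integral\<^sup>L Q H\<bar>"
      using c by (simp add: s_def abs_mult)
    ultimately show ?thesis using FL by (simp add: Lf_def Lg_def)
  qed
qed

end
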